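(* There exists a family of graphs $G$ on $n$ vertices (with $n\to\infty$) for which $\beta(G)=n/2$, $\alpha(G)=\frac25 n$, and $\beta_1(G)=(1-\frac15\log_2 5+o(1))n$. Moreover, $\beta^*(G)=(1-o(1))\beta_1(G)$.
   Context: For an undirected graph $G$ on vertex set $[n]$, consider the index coding problem: a server holds messages $x_1,\dots,x_n\in\Sigma$ ($|\Sigma|>1$), receiver $i$ wants $x_i$ and knows $x_j$ for every neighbor $j$ of $i$. A solution is an encoding $\mathcal{E}:\Sigma^n\to\Sigma_P$ from which each receiver can recover its message given its side information, for all message values. $\beta_t(G)$ is the minimum of $\lceil\log_2|\Sigma_P|\rceil$ over solutions with $|\Sigma|=2^t$; $\beta_1(G)$ is this quantity for $t=1$, and $\beta(G)=\lim_t\beta_t(G)/t=\inf_t\beta_t(G)/t$. For a positive integer $t$, $t\cdot G$ denotes the disjoint union of $t$ copies of $G$, and $\beta^*(G)=\lim_{t\to\infty}\frac1t\beta_1(t\cdot G)=\inf_t\frac1t\beta_1(t\cdot G)$. $\alpha(G)$ is the independence number. *)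

theory Defs
  imports Complex_Main
begin

definition is_graph :: "nat \<Rightarrow> (nat \<Rightarrow> nat \<Rightarrow> bool) \<Rightarrow> bool" where
  "is_graph n E \<longleftrightarrow> (\<forall>i j. E i j \<longrightarrow> i < n \<and> j < n \<and> i \<noteq> j \<and> E j i)"

definition msgs :: "nat \<Rightarrow> nat \<Rightarrow> (nat \<Rightarrow> nat) set" where
  "msgs n q = {x. (\<forall>i<n. x i < q) \<and> (\<forall>i\<ge>n. x i = 0)}"

definition is_solution ::
  "nat \<Rightarrow> (nat \<Rightarrow> nat \<Rightarrow> bool) \<Rightarrow> nat \<Rightarrow> ((nat \<Rightarrow> nat) \<Rightarrow> 'p) \<Rightarrow> bool" where
  "is_solution n E q enc \<longleftrightarrow>
     (\<forall>i<n. \<forall>x\<in>msgs n q. \<forall>y\<in>msgs n q.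
        enc x = enc y \<and> (\<forall>j<n. E i j \<longrightarrow> x j = y j) \<longrightarrow> x i = y i)"

text \<open>beta_t(G): minimum of ceil(log2 |Sigma_P|) over solutions with |Sigma| = 2^t;
 Sigma_P is taken to be the image of the encoding (codewords as naturals).\<close>

definition beta_t :: "nat \<Rightarrow> (nat \<Rightarrow> nat \<Rightarrow> bool) \<Rightarrow> nat \<Rightarrow> nat" where
  "beta_t n E t = (LEAST k. \<exists>enc :: (nat \<Rightarrow> nat) \<Rightarrow> nat.
      is_solution n E (2 ^ t) enc \<and> k = nat \<lceil>log 2 (real (card (enc ` msgs n (2 ^ t))))\<rceil>)"

abbreviation beta_1 :: "nat \<Rightarrow> (nat \<Rightarrow> nat \<Rightarrow> bool) \<Rightarrow> nat" where
  "beta_1 n E \<equiv> beta_t n E 1"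

definition beta :: "nat \<Rightarrow> (nat \<Rightarrow> nat \<Rightarrow> bool) \<Rightarrow> real" where
  "beta n E = (INF t\<in>{1..}. real (beta_t n E t) / real t)"

text \<open>t \<cdot> G: disjoint union of t copies of G; copy k occupies vertices k*n .. k*n+n-1.\<close>

definition copies_n :: "nat \<Rightarrow> nat \<Rightarrow> nat" where
  "copies_n t n = t * n"

definition copies_E :: "nat \<Rightarrow> nat \<Rightarrow> (nat \<Rightarrow> nat \<Rightarrow> bool) \<Rightarrow> nat \<Rightarrow> nat \<Rightarrow> bool" where
  "copies_E t n E u v \<longleftrightarrow> u < t * n \<and> v < t * n \<and> u div n = v div n \<and> E (u mod n) (v mod n)"

definition beta_star :: "nat \<Rightarrow> (nat \<Rightarrow> nat \<Rightarrow> bool) \<Rightarrow> real" where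
  "beta_star n E = (INF t\<in>{1..}. real (beta_1 (copies_n t n) (copies_E t n E)) / real t)"

definition alpha :: "nat \<Rightarrow> (nat \<Rightarrow> nat \<Rightarrow> bool) \<Rightarrow> nat" where
  "alpha n E = Max {card S | S. S \<subseteq> {0..<n} \<and> (\<forall>i\<in>S. \<forall>j\<in>S. \<not> E i j)}"

end

theory Submission
  imports Defs "HOL-Library.FuncSet" "HOL-Real_Asymp.Real_Asymp"
begin


lemma msgs_zero: "q \<ge> 1 \<Longrightarrow> (\<lambda>_. 0) \<in> msgs n q"
  by (auto simp: msgs_def)

lemma card_msgs: "card (msgs n q) = q ^ n \<and> finite (msgs n q)"
proof -
  have b: "bij_betw (\<lambda>x. restrict x {..<n}) (msgs n q) (PiE {..<n} (\<lambda>_. {..<q}))"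
  proof (rule bij_betw_byWitness[where f' = "\<lambda>f i. if i < n then f i else 0"])
    show "\<forall>a\<in>msgs n q. (\<lambda>i. if i < n then restrict a {..<n} i else 0) = a"
      by (auto simp: msgs_def fun_eq_iff)
    show "\<forall>a'\<in>PiE {..<n} (\<lambda>_. {..<q}). restrict (\<lambda>i. if i < n then a' i else 0) {..<n} = a'"
      by (auto simp: PiE_def extensional_def fun_eq_iff)
    show "(\<lambda>x. restrict x {..<n}) ` msgs n q \<subseteq> PiE {..<n} (\<lambda>_. {..<q})"
      unfolding msgs_def by (intro image_subsetI, subst restrict_PiE_iff) auto
    show "(\<lambda>f i. if i < n then f i else 0) ` PiE {..<n} (\<lambda>_. {..<q}) \<subseteq> msgs n q"
      by (auto simp: msgs_def PiE_def Pi_def)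
  qed
  have "card (PiE {..<n} (\<lambda>_. {..<q})) = q ^ n" by (simp add: card_PiE)
  moreover have "finite (PiE {..<n} (\<lambda>_. {..<q}))" by (simp add: finite_PiE)
  ultimately show ?thesis using b bij_betw_finite bij_betw_same_card by metis
qed

lemma finite_msgs[simp]: "finite (msgs n q)" using card_msgs by blast

lemma ex_solution: "\<exists>enc :: (nat \<Rightarrow> nat) \<Rightarrow> nat. is_solution n E q enc"
proof -
  obtain f :: "(nat \<Rightarrow> nat) \<Rightarrow> nat" and k where "inj_on f (msgs n q)"
    using finite_imp_inj_to_nat_seg[OF finite_msgs] by blast
  then show ?thesis unfolding is_solution_def by (metis inj_on_def)
qed

lemma beta_t_ge:
  assumes "\<And>enc :: (nat \<Rightarrow> nat) \<Rightarrow> nat. is_solution n E (2^t) enc \<Longrightarrow> L \<le> log 2 (card (enc ` msgs n (2^t)))"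
  shows "L \<le> real (beta_t n E t)"
proof -
  let ?P = "\<lambda>k. \<exists>enc :: (nat \<Rightarrow> nat) \<Rightarrow> nat.
      is_solution n E (2 ^ t) enc \<and> k = nat \<lceil>log 2 (real (card (enc ` msgs n (2 ^ t))))\<rceil>"
  have ex: "\<exists>k. ?P k" using ex_solution by blast
  have "?P (beta_t n E t)" unfolding beta_t_def by (rule LeastI_ex[OF ex])
  then obtain enc :: "(nat \<Rightarrow> nat) \<Rightarrow> nat" where s: "is_solution n E (2 ^ t) enc"
    and k: "beta_t n E t = nat \<lceil>log 2 (real (card (enc ` msgs n (2 ^ t))))\<rceil>" by blast
  have "L \<le> log 2 (card (enc ` msgs n (2^t)))" using assms s by blast
  also have "\<dots> \<le> of_int \<lceil>log 2 (real (card (enc ` msgs n (2 ^ t))))\<rceil>" by linarith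
  also have "\<dots> \<le> real (beta_t n E t)" unfolding k by linarith
  finally show ?thesis .
qed

lemma beta_t_le:
  fixes enc :: "(nat \<Rightarrow> nat) \<Rightarrow> 'a"
  assumes s: "is_solution n E (2^t) enc" and c: "card (enc ` msgs n (2^t)) \<le> 2 ^ K"
  shows "beta_t n E t \<le> K"
proof -
  obtain h :: "'a \<Rightarrow> nat" and k where h: "inj_on h (enc ` msgs n (2^t))"
    using finite_imp_inj_to_nat_seg[of "enc ` msgs n (2^t)"] by auto
  let ?e = "h \<circ> enc"
  have s2: "is_solution n E (2^t) ?e"
    using s h unfolding is_solution_def inj_on_def by (metis comp_apply image_eqI)
  have cc: "card (?e ` msgs n (2^t)) = card (enc ` msgs n (2^t))"
    using card_image[OF h] by (simp add: image_comp)
  have ne: "card (enc ` msgs n (2^t)) \<ge> 1"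
    using msgs_zero[of "2^t" n] by (metis One_nat_def Suc_leI card_gt_0_iff empty_iff finite_imageI finite_msgs image_eqI one_le_numeral one_le_power)
  have "log 2 (card (enc ` msgs n (2^t))) \<le> log 2 (2 ^ K)"
    using c ne by (subst log_le_cancel_iff) (auto simp del: of_nat_power simp: of_nat_power[symmetric])
  also have "\<dots> = K" by (simp add: log_nat_power)
  finally have l: "log 2 (card (enc ` msgs n (2^t))) \<le> K" .
  have "beta_t n E t \<le> nat \<lceil>log 2 (real (card (?e ` msgs n (2 ^ t))))\<rceil>"
    unfolding beta_t_def by (rule Least_le) (use s2 in blast)
  also have "\<dots> \<le> K" using l cc by (simp add: ceiling_le_iff nat_le_iff)
  finally show ?thesis .
qed


definition adj5 :: "nat \<Rightarrow> nat \<Rightarrow> bool" where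
  "adj5 r s \<longleftrightarrow> s = Suc r mod 5 \<or> r = Suc s mod 5"

definition Gm :: "nat \<Rightarrow> nat \<Rightarrow> nat \<Rightarrow> bool" where
  "Gm m u v \<longleftrightarrow> u < 5*m \<and> v < 5*m \<and> u div 5 = v div 5 \<and> adj5 (u mod 5) (v mod 5)"

lemma suc_mod5_neq: "Suc r mod 5 \<noteq> (r::nat)" by presburger

lemma is_graph_Gm: "is_graph (5*m) (Gm m)"
  unfolding is_graph_def Gm_def adj5_def using suc_mod5_neq by metis

lemma Gm_low: "i < 5*m \<Longrightarrow> Gm (Suc m) i j \<longleftrightarrow> Gm m i j"
proof -
  assume i: "i < 5*m"
  have "j div 5 = i div 5 \<Longrightarrow> j < 5*m"
  proof -
    assume "j div 5 = i div 5"
    moreover have "i div 5 < m" using i by auto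
    ultimately show ?thesis by auto
  qed
  then show ?thesis unfolding Gm_def using i by auto
qed

lemma Gm_high: "r < 5 \<Longrightarrow> Gm (Suc m) (5*m + r) j \<longleftrightarrow> (5*m \<le> j \<and> Gm 1 r (j - 5*m))"
proof -
  assume r: "r < 5"
  have d: "(5*m + r) div 5 = m" "(5*m+r) mod 5 = r" using r by auto
  show ?thesis
  proof
    assume "Gm (Suc m) (5*m + r) j"
    then have j: "j div 5 = m" "adj5 r (j mod 5)" unfolding Gm_def d by auto
    then have "5*m \<le> j" "j < 5*m+5" by auto
    have jm: "j - 5*m = j mod 5" using j(1) by (metis minus_div_mult_eq_mod mult.commute)
    show "5*m \<le> j \<and> Gm 1 r (j - 5*m)" using j r \<open>5*m \<le> j\<close> unfolding Gm_def jm
      by (auto simp: adj5_def)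
  next
    assume a: "5*m \<le> j \<and> Gm 1 r (j - 5*m)"
    then obtain s where s: "j = 5*m + s" "s < 5" "adj5 r s" unfolding Gm_def
      by (metis add_diff_inverse_nat div_less less_numeral_extra(3) mod_less mult_1_right not_less)
    then show "Gm (Suc m) (5*m + r) j" unfolding Gm_def using d r by auto
  qed
qed

lemma Gm1_nbrs: "Gm 1 i j \<longleftrightarrow> i < 5 \<and> j < 5 \<and> (j = Suc i mod 5 \<or> i = Suc j mod 5)"
  unfolding Gm_def adj5_def by auto

lemma copies_Gm: "copies_E t (5*m) (Gm m) = Gm (t*m)"
proof (intro ext)
  fix u v
  show "copies_E t (5*m) (Gm m) u v = Gm (t*m) u v"
  proof (cases "m = 0")
    case True then show ?thesis by (simp add: copies_E_def Gm_def)
  next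
    case False
    have e1: "u div (5*m) = u div 5 div m" "v div (5*m) = v div 5 div m" by (simp_all add: div_mult2_eq)
    have e2: "u mod (5*m) div 5 = u div 5 mod m" "v mod (5*m) div 5 = v div 5 mod m"
      by (simp_all add: mod_mult2_eq)
    have e3: "u mod (5*m) mod 5 = u mod 5" "v mod (5*m) mod 5 = v mod 5"
      by (simp_all add: mod_mod_cancel)
    have lt: "u mod (5*m) < 5*m" "v mod (5*m) < 5*m" using False by auto
    have key: "(u div 5 div m = v div 5 div m \<and> u div 5 mod m = v div 5 mod m) \<longleftrightarrow> u div 5 = v div 5"
      by (metis div_mult_mod_eq)
    show ?thesis unfolding copies_E_def Gm_def e1 e2 e3 using lt key
      by (auto simp: mult.commute mult.left_commute)
  qed
qed


definition indep :: "nat \<Rightarrow> (nat \<Rightarrow> nat \<Rightarrow> bool) \<Rightarrow> nat \<Rightarrow> (nat \<Rightarrow> nat) set \<Rightarrow> bool" where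
  "indep n E q S \<longleftrightarrow> S \<subseteq> msgs n q \<and>
     (\<forall>x\<in>S. \<forall>y\<in>S. \<forall>i<n. (\<forall>j<n. E i j \<longrightarrow> x j = y j) \<longrightarrow> x i = y i)"

lemma fiber_indep: "is_solution n E q enc \<Longrightarrow> indep n E q {x\<in>msgs n q. enc x = p}"
  unfolding is_solution_def indep_def by auto

lemma code_bound:
  assumes s: "is_solution n E q enc" and b: "\<And>S. indep n E q S \<Longrightarrow> real (card S) \<le> B"
  shows "real (card (msgs n q)) \<le> real (card (enc ` msgs n q)) * B"
proof -
  let ?F = "\<lambda>p. {x\<in>msgs n q. enc x = p}"
  have eq: "(\<Union>p\<in>enc ` msgs n q. ?F p) = msgs n q" by auto
  have "card (\<Union>p\<in>enc ` msgs n q. ?F p) \<le> (\<Sum>p\<in>enc ` msgs n q. card (?F p))"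
    by (rule card_UN_le) simp
  then have "card (msgs n q) \<le> (\<Sum>p\<in>enc ` msgs n q. card (?F p))"
    by (simp only: eq)
  then have "real (card (msgs n q)) \<le> real (\<Sum>p\<in>enc ` msgs n q. card (?F p))"
    by (simp only: of_nat_le_iff)
  also have "\<dots> = (\<Sum>p\<in>enc ` msgs n q. real (card (?F p)))" by (rule of_nat_sum)
  also have "\<dots> \<le> (\<Sum>p\<in>enc ` msgs n q. B)"
    by (rule sum_mono) (rule b, rule fiber_indep[OF s])
  finally show ?thesis by simp
qed

lemma indep_finite: "indep n E q S \<Longrightarrow> finite S"
  unfolding indep_def using finite_subset finite_msgs by blast

lemma indep_C5_dec:
  assumes "indep 5 (Gm 1) q S" "x \<in> S" "y \<in> S" "i < 5"
    "x (Suc i mod 5) = y (Suc i mod 5)" "x ((i+4) mod 5) = y ((i+4) mod 5)"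
  shows "x i = y i"
proof -
  have "\<forall>j<5. Gm 1 i j \<longrightarrow> x j = y j"
  proof (intro allI impI)
    fix j assume j: "j < 5" "Gm 1 i j"
    then have "j = Suc i mod 5 \<or> i = Suc j mod 5" unfolding Gm1_nbrs by blast
    moreover have "i = Suc j mod 5 \<Longrightarrow> j = (i+4) mod 5" using j(1) by presburger
    ultimately have "j = Suc i mod 5 \<or> j = (i+4) mod 5" by blast
    then show "x j = y j" using assms by auto
  qed
  then show ?thesis using assms unfolding indep_def by auto
qed

lemma indep_C5_dec':
  assumes "indep 5 (Gm 1) q S" "x \<in> S" "y \<in> S" "i < 5"
    "Suc i mod 5 = a" "(i+4) mod 5 = b" "x a = y a" "x b = y b"
  shows "x i = y i"
  using indep_C5_dec[OF assms(1-4)] assms(5-8) by blast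

lemma msgs_eq5:
  assumes "x \<in> msgs 5 q" "y \<in> msgs 5 q" "x 0 = y 0" "x 1 = y 1" "x 2 = y 2" "x 3 = y 3" "x 4 = y 4"
  shows "x = y"
proof
  fix i show "x i = y i"
  proof (cases "i < 5")
    case True then have "i = 0 \<or> i = 1 \<or> i = 2 \<or> i = 3 \<or> i = 4" by auto
    then show ?thesis using assms by auto
  next
    case False then show ?thesis using assms unfolding msgs_def by auto
  qed
qed

lemma sqrt_bound:
  fixes c a b q :: real
  assumes "0 \<le> c" "c \<le> q" "c \<le> a * b" "0 \<le> a" "0 \<le> b"
  shows "c \<le> sqrt q * ((a + b) / 2)"
proof -
  have ab: "a * b \<le> ((a+b)/2)^2"
  proof -
    have "((a+b)/2)^2 - a*b = ((a-b)/2)^2" by (simp add: power2_eq_square field_simps)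
    then show ?thesis by (metis diff_ge_0_iff_ge zero_le_power2)
  qed
  have cc: "c * c \<le> q * (a * b)" using assms by (intro mult_mono) auto
  have qq: "q * (a * b) \<le> q * ((a+b)/2)^2"
    using assms ab by (intro mult_left_mono) auto
  have sq: "(sqrt q * ((a+b)/2))^2 = q * ((a+b)/2)^2"
    by (subst power_mult_distrib, subst real_sqrt_pow2) (use assms in auto)
  have "c^2 \<le> (sqrt q * ((a+b)/2))^2"
    unfolding sq power2_eq_square[of c] using cc qq by linarith
  moreover have "0 \<le> sqrt q * ((a+b)/2)" using assms by simp
  ultimately show ?thesis by (rule power2_le_imp_le)
qed

lemma core_C5:
  assumes ind: "indep 5 (Gm 1) q S"
  shows "real (card S) \<le> sqrt q * q^2"
proof -
  have fin: "finite S" using ind by (rule indep_finite)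
  have sub: "S \<subseteq> msgs 5 q" using ind unfolding indep_def by blast
  have lt: "\<And>x i. x \<in> S \<Longrightarrow> i < 5 \<Longrightarrow> x i < q" using sub unfolding msgs_def by blast
  have D0: "x 0 = y 0" if "x \<in> S" "y \<in> S" "x 1 = y 1" "x 4 = y 4" for x y
    by (rule indep_C5_dec'[OF ind that(1,2) _ _ _ that(3) that(4)]) simp_all
  have D1: "x 1 = y 1" if "x \<in> S" "y \<in> S" "x 2 = y 2" "x 0 = y 0" for x y
    by (rule indep_C5_dec'[OF ind that(1,2) _ _ _ that(3) that(4)]) simp_all
  have D2: "x 2 = y 2" if "x \<in> S" "y \<in> S" "x 3 = y 3" "x 1 = y 1" for x y
    by (rule indep_C5_dec'[OF ind that(1,2) _ _ _ that(3) that(4)]) simp_all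
  have D3: "x 3 = y 3" if "x \<in> S" "y \<in> S" "x 4 = y 4" "x 2 = y 2" for x y
    by (rule indep_C5_dec'[OF ind that(1,2) _ _ _ that(3) that(4)]) simp_all
  have D4: "x 4 = y 4" if "x \<in> S" "y \<in> S" "x 0 = y 0" "x 3 = y 3" for x y
    by (rule indep_C5_dec'[OF ind that(1,2) _ _ _ that(3) that(4)]) simp_all
  have EQ: "\<And>x y. x \<in> S \<Longrightarrow> y \<in> S \<Longrightarrow> x 0 = y 0 \<Longrightarrow> x 1 = y 1 \<Longrightarrow> x 2 = y 2
     \<Longrightarrow> x 3 = y 3 \<Longrightarrow> x 4 = y 4 \<Longrightarrow> x = y"
    using msgs_eq5 sub by blast
  define K where "K = (\<lambda>x::nat\<Rightarrow>nat. (x 0, x 4))"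
  define F where "F = (\<lambda>k. {x\<in>S. K x = k})"
  define a where "a = (\<lambda>k. card ((\<lambda>x. x 1) ` F k))"
  define b where "b = (\<lambda>k. card ((\<lambda>x. x 3) ` F k))"
  have finF: "\<And>k. finite (F k)" unfolding F_def using fin by auto
  have cS: "card S = (\<Sum>k\<in>K ` S. card (F k))"
    unfolding F_def card_eq_sum using sum.image_gen[OF fin, of "\<lambda>_. 1::nat" K] by simp
  have cF: "real (card (F k)) \<le> sqrt q * ((real (a k) + real (b k)) / 2)" for k
  proof (rule sqrt_bound)
    have "inj_on (\<lambda>x. x 2) (F k)"
    proof (rule inj_onI)
      fix x y assume a: "x \<in> F k" "y \<in> F k" "x 2 = y 2"
      then have xs: "x \<in> S" "y \<in> S" and e: "x 0 = y 0" "x 4 = y 4" by (auto simp: F_def K_def)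
      have 1: "x 1 = y 1" using D1[OF xs a(3) e(1)] .
      have 3: "x 3 = y 3" using D3[OF xs e(2) a(3)] .
      show "x = y" using EQ[OF xs e(1) 1 a(3) 3 e(2)] .
    qed
    moreover have "(\<lambda>x. x 2) ` F k \<subseteq> {..<q}" unfolding F_def using lt by auto
    ultimately have "card (F k) \<le> card {..<q}" by (meson card_inj_on_le finite_lessThan)
    then show "real (card (F k)) \<le> real q" by simp
    have "inj_on (\<lambda>x. (x 1, x 3)) (F k)"
    proof (rule inj_onI)
      fix x y assume a: "x \<in> F k" "y \<in> F k" "(x 1, x 3) = (y 1, y 3)"
      then have xs: "x \<in> S" "y \<in> S" and e: "x 0 = y 0" "x 4 = y 4" by (auto simp: F_def K_def)
      have 13: "x 1 = y 1" "x 3 = y 3" using a(3) by auto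
      have 2: "x 2 = y 2" using D2[OF xs 13(2) 13(1)] .
      show "x = y" using EQ[OF xs e(1) 13(1) 2 13(2) e(2)] .
    qed
    moreover have "(\<lambda>x. (x 1, x 3)) ` F k \<subseteq> ((\<lambda>x. x 1) ` F k) \<times> ((\<lambda>x. x 3) ` F k)" by auto
    ultimately have "card (F k) \<le> card (((\<lambda>x. x 1) ` F k) \<times> ((\<lambda>x. x 3) ` F k))"
      by (meson card_inj_on_le finite_SigmaI finite_imageI finF)
    then show "real (card (F k)) \<le> real (a k) * real (b k)"
      unfolding a_def b_def card_cartesian_product by (metis of_nat_le_iff of_nat_mult)
  qed auto
  have sa: "(\<Sum>k\<in>K ` S. a k) \<le> q^2"
  proof -
    have eq: "(\<lambda>x. (K x, x 1)) ` S = Sigma (K ` S) (\<lambda>k. (\<lambda>x. x 1) ` F k)"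
      by (auto simp: F_def) (metis (no_types, lifting) image_eqI)
    have "(\<Sum>k\<in>K ` S. a k) = card ((\<lambda>x. (K x, x 1)) ` S)"
      unfolding eq a_def using fin finF by (subst card_SigmaI) auto
    also have "\<dots> \<le> card ({..<q} \<times> {..<q})"
    proof (rule card_inj_on_le[where f = "\<lambda>(k, v). (v, snd k)"])
      show "inj_on (\<lambda>(k, v). (v, snd k)) ((\<lambda>x. (K x, x 1)) ` S)"
      proof (rule inj_onI)
        fix u w assume "u \<in> (\<lambda>x. (K x, x 1)) ` S" "w \<in> (\<lambda>x. (K x, x 1)) ` S"
          "(case u of (k, v) \<Rightarrow> (v, snd k)) = (case w of (k, v) \<Rightarrow> (v, snd k))"
        then obtain x y where xs: "x \<in> S" "y \<in> S" and u: "u = (K x, x 1)" and w: "w = (K y, y 1)"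
          and e: "x 1 = y 1" "x 4 = y 4" by (auto simp: K_def)
        have "x 0 = y 0" using D0[OF xs e] .
        then show "u = w" using u w e by (simp add: K_def)
      qed
      show "(\<lambda>(k, v). (v, snd k)) ` (\<lambda>x. (K x, x 1)) ` S \<subseteq> {..<q} \<times> {..<q}"
        unfolding K_def using lt by auto
    qed auto
    finally show ?thesis by (simp add: power2_eq_square)
  qed
  have sb: "(\<Sum>k\<in>K ` S. b k) \<le> q^2"
  proof -
    have eq: "(\<lambda>x. (K x, x 3)) ` S = Sigma (K ` S) (\<lambda>k. (\<lambda>x. x 3) ` F k)"
      by (auto simp: F_def) (metis (no_types, lifting) image_eqI)
    have "(\<Sum>k\<in>K ` S. b k) = card ((\<lambda>x. (K x, x 3)) ` S)"
      unfolding eq b_def using fin finF by (subst card_SigmaI) auto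
    also have "\<dots> \<le> card ({..<q} \<times> {..<q})"
    proof (rule card_inj_on_le[where f = "\<lambda>(k, v). (v, fst k)"])
      show "inj_on (\<lambda>(k, v). (v, fst k)) ((\<lambda>x. (K x, x 3)) ` S)"
      proof (rule inj_onI)
        fix u w assume "u \<in> (\<lambda>x. (K x, x 3)) ` S" "w \<in> (\<lambda>x. (K x, x 3)) ` S"
          "(case u of (k, v) \<Rightarrow> (v, fst k)) = (case w of (k, v) \<Rightarrow> (v, fst k))"
        then obtain x y where xs: "x \<in> S" "y \<in> S" and u: "u = (K x, x 3)" and w: "w = (K y, y 3)"
          and e: "x 3 = y 3" "x 0 = y 0" by (auto simp: K_def)
        have "x 4 = y 4" using D4[OF xs e(2) e(1)] .
        then show "u = w" using u w e by (simp add: K_def)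
      qed
      show "(\<lambda>(k, v). (v, fst k)) ` (\<lambda>x. (K x, x 3)) ` S \<subseteq> {..<q} \<times> {..<q}"
        unfolding K_def using lt by auto
    qed auto
    finally show ?thesis by (simp add: power2_eq_square)
  qed
  have "real (card S) = (\<Sum>k\<in>K ` S. real (card (F k)))" unfolding cS by simp
  also have "\<dots> \<le> (\<Sum>k\<in>K ` S. sqrt q * ((real (a k) + real (b k)) / 2))"
    by (rule sum_mono) (rule cF)
  also have "\<dots> = sqrt q * ((real (\<Sum>k\<in>K ` S. a k) + real (\<Sum>k\<in>K ` S. b k)) / 2)"
    by (simp add: sum_distrib_left sum.distrib sum_divide_distrib[symmetric] distrib_left)
  also have "\<dots> \<le> sqrt q * ((real (q^2) + real (q^2)) / 2)"
  proof -
    have "real (\<Sum>k\<in>K ` S. a k) + real (\<Sum>k\<in>K ` S. b k) \<le> real (q^2) + real (q^2)"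
      using sa sb by (intro add_mono) (simp_all only: of_nat_le_iff)
    then show ?thesis by (intro mult_left_mono divide_right_mono) auto
  qed
  finally show ?thesis by simp
qed


lemma lift:
  assumes base: "\<And>S. indep 5 (Gm 1) q S \<Longrightarrow> real (card S) \<le> B" and B0: "0 \<le> B"
  shows "indep (5*m) (Gm m) q S \<Longrightarrow> real (card S) \<le> B^m"
proof (induction m arbitrary: S)
  case 0
  have "S \<subseteq> msgs 0 q" using 0 unfolding indep_def by simp
  then have "card S \<le> card (msgs 0 q)" by (rule card_mono[OF finite_msgs])
  then show ?case using card_msgs[of 0 q] by simp
next
  case (Suc m)
  define pA where "pA = (\<lambda>x::nat\<Rightarrow>nat. \<lambda>i. if i < 5*m then x i else 0)"
  define pB where "pB = (\<lambda>x::nat\<Rightarrow>nat. \<lambda>i. if i < 5 then x (5*m+i) else 0)"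
  have ind: "indep (5*Suc m) (Gm (Suc m)) q S" by fact
  have sub: "S \<subseteq> msgs (5*Suc m) q" using ind unfolding indep_def by blast
  have dec: "x i = y i" if "x\<in>S" "y\<in>S" "i < 5*Suc m"
    "\<And>j. j < 5*Suc m \<Longrightarrow> Gm (Suc m) i j \<Longrightarrow> x j = y j" for x y i
    using ind that unfolding indep_def by blast
  have fin: "finite S" using ind by (rule indep_finite)
  have iA: "indep (5*m) (Gm m) q (pA ` S)"
    unfolding indep_def
  proof (intro conjI ballI allI impI)
    show "pA ` S \<subseteq> msgs (5*m) q" using sub by (auto simp: pA_def msgs_def)
    fix x' y' i assume x': "x' \<in> pA ` S" and y': "y' \<in> pA ` S" and i: "i < 5*m"
      and h: "\<forall>j<5*m. Gm m i j \<longrightarrow> x' j = y' j"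
    obtain x y where xy: "x\<in>S" "y\<in>S" "x' = pA x" "y' = pA y" using x' y' by blast
    have "x i = y i"
    proof (rule dec[OF xy(1,2)])
      show "i < 5*Suc m" using i by simp
      fix j assume "j < 5*Suc m" "Gm (Suc m) i j"
      then have g: "Gm m i j" using Gm_low[OF i] by simp
      then have j: "j < 5*m" unfolding Gm_def by simp
      then have "x' j = y' j" using h g by blast
      then show "x j = y j" using j xy by (simp add: pA_def)
    qed
    then show "x' i = y' i" using xy i by (simp add: pA_def)
  qed
  have IH: "real (card (pA ` S)) \<le> B^m" by (rule Suc.IH[OF iA])
  have fib: "real (card {x\<in>S. pA x = a}) \<le> B" for a
  proof -
    let ?T = "{x\<in>S. pA x = a}"
    have inj: "inj_on pB ?T"
    proof (rule inj_onI)
      fix x y assume xT: "x\<in>?T" and yT: "y\<in>?T" and e: "pB x = pB y"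
      have xm: "x \<in> msgs (5*Suc m) q" "y \<in> msgs (5*Suc m) q" using xT yT sub by auto
      show "x = y"
      proof
        fix i
        consider "i < 5*m" | "5*m \<le> i" "i < 5*m+5" | "5*m+5 \<le> i" by linarith
        then show "x i = y i"
        proof cases
          case 1
          have "pA x i = pA y i" using xT yT by simp
          then show ?thesis using 1 by (simp add: pA_def)
        next
          case 2
          have "pB x (i - 5*m) = pB y (i - 5*m)" using e by simp
          moreover have "i - 5*m < 5" "5*m + (i - 5*m) = i" using 2 by auto
          ultimately show ?thesis by (simp add: pB_def)
        next
          case 3 then show ?thesis using xm by (simp add: msgs_def)
        qed
      qed
    qed
    have "indep 5 (Gm 1) q (pB ` ?T)"
      unfolding indep_def
    proof (intro conjI ballI allI impI)
      show "pB ` ?T \<subseteq> msgs 5 q" using sub by (auto simp: pB_def msgs_def)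
      fix x' y' i assume x': "x' \<in> pB ` ?T" and y': "y' \<in> pB ` ?T" and i: "i < 5"
        and h: "\<forall>j<5. Gm 1 i j \<longrightarrow> x' j = y' j"
      obtain x y where xy: "x\<in>S" "y\<in>S" "x' = pB x" "y' = pB y" using x' y' by blast
      have "x (5*m+i) = y (5*m+i)"
      proof (rule dec[OF xy(1,2)])
        show "5*m+i < 5*Suc m" using i by simp
        fix j assume "j < 5*Suc m" "Gm (Suc m) (5*m+i) j"
        then have j: "5*m \<le> j" "Gm 1 i (j - 5*m)" using Gm_high[OF i] by auto
        then have j5: "j - 5*m < 5" unfolding Gm_def by simp
        then have "x' (j - 5*m) = y' (j - 5*m)" using h j by blast
        then show "x j = y j" using j j5 xy by (simp add: pB_def)
      qed
      then show "x' i = y' i" using xy i by (simp add: pB_def)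
    qed
    then have "real (card (pB ` ?T)) \<le> B" by (rule base)
    then show ?thesis using card_image[OF inj] by simp
  qed
  have cS: "card S = (\<Sum>a\<in>pA ` S. card {x\<in>S. pA x = a})"
    unfolding card_eq_sum using sum.image_gen[OF fin, of "\<lambda>_. 1::nat" pA] by simp
  have "real (card S) = (\<Sum>a\<in>pA ` S. real (card {x\<in>S. pA x = a}))"
    unfolding cS by simp
  also have "\<dots> \<le> (\<Sum>a\<in>pA ` S. B)" by (rule sum_mono) (rule fib)
  also have "\<dots> = real (card (pA ` S)) * B" by simp
  also have "\<dots> \<le> B^m * B" using IH B0 by (rule mult_right_mono)
  finally show ?case by (simp add: mult.commute)
qed

lemma code_lower:
  assumes "is_solution (5*m) (Gm m) q enc" "\<And>S. indep 5 (Gm 1) q S \<Longrightarrow> real (card S) \<le> B" "0 \<le> B"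
  shows "real q ^ (5*m) \<le> real (card (enc ` msgs (5*m) q)) * B^m"
  using code_bound[OF assms(1) lift[OF assms(2,3)]] card_msgs[of "5*m" q] by simp

lemma log_lower:
  assumes "2 powr L \<le> real c * B^m" "0 < B"
  shows "L - m * log 2 B \<le> log 2 (real c)"
proof -
  have "0 < real c * B^m" using assms(1) powr_gt_zero[of 2 L] by linarith
  then have c: "0 < real c" using assms(2) by (simp add: zero_less_mult_iff)
  have "L = log 2 (2 powr L)" by simp
  also have "\<dots> \<le> log 2 (real c * B^m)"
    using assms(1) c assms(2) by (subst log_le_cancel_iff) auto
  also have "\<dots> = log 2 (real c) + m * log 2 B"
    using c assms(2) by (simp add: log_mult log_nat_power)
  finally show ?thesis by simp
qed

lemma beta_t_Gm_ge: "real (5*m) * t / 2 \<le> real (beta_t (5*m) (Gm m) t)"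
proof (rule beta_t_ge)
  fix enc :: "(nat \<Rightarrow> nat) \<Rightarrow> nat"
  assume s: "is_solution (5*m) (Gm m) (2^t) enc"
  define B where "B = sqrt (real (2^t::nat)) * real ((2^t::nat)^2)"
  have B: "B = 2 powr (5 * t / 2)"
  proof -
    have "real (2^t::nat) = 2 powr t" by (simp add: powr_realpow)
    then have "sqrt (real (2^t::nat)) = 2 powr (t/2)" by (simp add: powr_half_sqrt_powr)
    moreover have "real ((2^t::nat)^2) = 2 powr (2*t)"
      by (simp add: powr_realpow[symmetric] power_mult[symmetric] mult.commute)
    ultimately show ?thesis unfolding B_def by (simp add: powr_add[symmetric])
  qed
  have "real (2^t::nat) ^ (5*m) \<le> real (card (enc ` msgs (5*m) (2^t))) * B^m"
  proof (rule code_lower[OF s])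
    show "\<And>S. indep 5 (Gm 1) (2^t) S \<Longrightarrow> real (card S) \<le> B" unfolding B_def by (rule core_C5)
    show "0 \<le> B" unfolding B by simp
  qed
  moreover have "real (2^t::nat) ^ (5*m) = 2 powr (real (5*m*t))"
  proof -
    have "real (2^t::nat) ^ (5*m) = (2::real) ^ (t*(5*m))" by (simp add: power_mult)
    also have "\<dots> = (2::real) ^ (5*m*t)" by (simp add: mult.commute)
    also have "\<dots> = 2 powr (real (5*m*t))" by (rule powr_realpow[symmetric]) simp
    finally show ?thesis .
  qed
  ultimately have "real (5*m*t) - m * log 2 B \<le> log 2 (real (card (enc ` msgs (5*m) (2^t))))"
    by (intro log_lower) (auto simp: B)
  moreover have "log 2 B = 5 * t / 2" unfolding B by simp
  ultimately show "real (5*m) * t / 2 \<le> log 2 (real (card (enc ` msgs (5*m) (2^t))))"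
    by (simp add: algebra_simps)
qed

lemma core_bin: "indep 5 (Gm 1) 2 S \<Longrightarrow> real (card S) \<le> 5"
proof -
  assume "indep 5 (Gm 1) 2 S"
  then have a: "real (card S) \<le> sqrt 2 * 4" using core_C5[of 2 S] by simp
  have "sqrt 2 < 1.5" by (rule real_less_lsqrt) (auto simp: power2_eq_square)
  then have "real (card S) < 6" using a by linarith
  then show ?thesis by simp
qed

lemma beta1_Gm_ge: "real m * (5 - log 2 5) \<le> real (beta_1 (5*m) (Gm m))"
proof (rule beta_t_ge)
  fix enc :: "(nat \<Rightarrow> nat) \<Rightarrow> nat"
  assume s: "is_solution (5*m) (Gm m) (2^1) enc"
  have "real (2::nat) ^ (5*m) \<le> real (card (enc ` msgs (5*m) 2)) * 5^m"
    by (rule code_lower) (use s core_bin in auto)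
  moreover have "real (2::nat) ^ (5*m) = 2 powr (real (5*m))"
    by (subst powr_realpow) simp_all
  ultimately have "real (5*m) - m * log 2 5 \<le> log 2 (real (card (enc ` msgs (5*m) 2)))"
    by (intro log_lower) auto
  moreover have "real m * (5 - log 2 5) = real (5*m) - real m * log 2 5" by (simp add: algebra_simps)
  ultimately show "real m * (5 - log 2 5) \<le> log 2 (real (card (enc ` msgs (5*m) (2^1))))"
    unfolding power_one_right by linarith
qed


lemma blk_div: "(s::nat) < 5 \<Longrightarrow> (5*a + s) div 5 = a" by auto
lemma blk_mod: "(s::nat) < 5 \<Longrightarrow> (5*a + s) mod 5 = s" by auto

lemma Gm_blk:
  assumes v: "v < 5*m" and s: "s < 5"
  shows "Gm m v (5*(v div 5) + s) \<longleftrightarrow> adj5 (v mod 5) s"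
proof -
  have "v div 5 < m" using v by auto
  then have "5*(v div 5) + s < 5*m" using s by linarith
  then show ?thesis unfolding Gm_def using v s by (simp add: blk_div blk_mod)
qed

definition nx :: "nat \<Rightarrow> nat" where "nx v = 5*(v div 5) + Suc (v mod 5) mod 5"
definition pv :: "nat \<Rightarrow> nat" where "pv v = 5*(v div 5) + (v mod 5 + 4) mod 5"

lemma nx_Gm: assumes v: "v < 5*m" shows "Gm m v (nx v)"
proof -
  have "Suc (v mod 5) mod 5 < 5" by simp
  from Gm_blk[OF v this] show ?thesis unfolding nx_def by (simp add: adj5_def)
qed

lemma pv_Gm: assumes v: "v < 5*m" shows "Gm m v (pv v)"
proof -
  have l: "(v mod 5 + 4) mod 5 < 5" by simp
  have e: "v mod 5 = Suc ((v mod 5 + 4) mod 5) mod 5" by presburger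
  have "adj5 (v mod 5) ((v mod 5 + 4) mod 5)" unfolding adj5_def using e by blast
  with Gm_blk[OF v l] show ?thesis unfolding pv_def by simp
qed

lemma nx_pv: "nx (pv v) = v"
proof -
  have a: "pv v div 5 = v div 5" "pv v mod 5 = (v mod 5 + 4) mod 5"
    unfolding pv_def by (simp_all add: blk_div blk_mod)
  have "Suc ((v mod 5 + 4) mod 5) mod 5 = v mod 5" by presburger
  then show ?thesis unfolding nx_def a by simp
qed

lemma Gm_lt: "Gm m u v \<Longrightarrow> v < 5*m" unfolding Gm_def by simp

lemma mod2_cancel: "((a::nat) + b) mod 2 = (a + c) mod 2 \<Longrightarrow> b mod 2 = c mod 2" by presburger
lemma mod2_cancel': "((b::nat) + a) mod 2 = (c + a) mod 2 \<Longrightarrow> b mod 2 = c mod 2" by presburger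

lemma beta2_Gm_le: "beta_t (5*m) (Gm m) 2 \<le> 5*m"
proof -
  define enc where "enc = (\<lambda>x::nat\<Rightarrow>nat. \<lambda>i. if i < 5*m then (x i div 2 + x (nx i) mod 2) mod 2 else 0)"
  have s: "is_solution (5*m) (Gm m) (2^2) enc"
    unfolding is_solution_def
  proof (intro allI impI ballI)
    fix v x y assume v: "v < 5*m" and x: "x \<in> msgs (5*m) (2^2)" and y: "y \<in> msgs (5*m) (2^2)"
      and h: "enc x = enc y \<and> (\<forall>j<5*m. Gm m v j \<longrightarrow> x j = y j)"
    have nb: "x j = y j" if "Gm m v j" for j using h that Gm_lt[OF that] by blast
    have pvl: "pv v < 5*m" using Gm_lt[OF pv_Gm[OF v]] .
    have e1: "(x v div 2 + x (nx v) mod 2) mod 2 = (y v div 2 + y (nx v) mod 2) mod 2"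
      using fun_cong[OF conjunct1[OF h], of v] v by (simp add: enc_def)
    have n1: "x (nx v) = y (nx v)" by (rule nb[OF nx_Gm[OF v]])
    have "(x v div 2 + y (nx v) mod 2) mod 2 = (y v div 2 + y (nx v) mod 2) mod 2"
      using e1 n1 by (simp only:)
    then have m1: "(x v div 2) mod 2 = (y v div 2) mod 2" by (rule mod2_cancel')
    have "x v < 4" "y v < 4" using x y v by (auto simp: msgs_def)
    then have "x v div 2 < 2" "y v div 2 < 2" by auto
    then have d: "x v div 2 = y v div 2" using m1 by simp
    have e2: "(x (pv v) div 2 + x v mod 2) mod 2 = (y (pv v) div 2 + y v mod 2) mod 2"
      using fun_cong[OF conjunct1[OF h], of "pv v"] pvl by (simp add: enc_def nx_pv)
    have n2: "x (pv v) = y (pv v)" by (rule nb[OF pv_Gm[OF v]])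
    have "(y (pv v) div 2 + x v mod 2) mod 2 = (y (pv v) div 2 + y v mod 2) mod 2"
      using e2 n2 by (simp only:)
    then have "(x v mod 2) mod 2 = (y v mod 2) mod 2" by (rule mod2_cancel)
    then have "x v mod 2 = y v mod 2" by simp
    with d show "x v = y v" by (metis div_mult_mod_eq)
  qed
  have "enc ` msgs (5*m) (2^2) \<subseteq> msgs (5*m) 2" by (auto simp: enc_def msgs_def)
  then have "card (enc ` msgs (5*m) (2^2)) \<le> 2^(5*m)"
    using card_mono[OF finite_msgs] card_msgs by metis
  then show ?thesis by (rule beta_t_le[OF s])
qed


definition w :: "nat list \<Rightarrow> nat \<Rightarrow> nat" where "w L = (\<lambda>i. if i < 5 then L ! i else 0)"
definition Ls :: "nat list list" where "Ls = [[0,0,0,0,0],[1,1,0,0,0],[0,0,1,1,0],[1,1,0,1,1],[1,0,1,1,1]]"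
definition I0 :: "(nat \<Rightarrow> nat) set" where "I0 = w ` set Ls"

lemma indep_C5_intro:
  assumes "S \<subseteq> msgs 5 q"
    "\<And>x y i. x\<in>S \<Longrightarrow> y\<in>S \<Longrightarrow> i<5 \<Longrightarrow> x (Suc i mod 5) = y (Suc i mod 5) \<Longrightarrow>
       x ((i+4) mod 5) = y ((i+4) mod 5) \<Longrightarrow> x i = y i"
  shows "indep 5 (Gm 1) q S"
  unfolding indep_def
proof (intro conjI ballI allI impI)
  show "S \<subseteq> msgs 5 q" by fact
  fix x y i assume xy: "x\<in>S" "y\<in>S" and i: "i < 5" and h: "\<forall>j<5. Gm 1 i j \<longrightarrow> x j = y j"
  have "Gm 1 i (Suc i mod 5)" unfolding Gm1_nbrs using i by simp
  then have 1: "x (Suc i mod 5) = y (Suc i mod 5)" using h by simp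
  have e: "i = Suc ((i+4) mod 5) mod 5" using i by presburger
  have "Gm 1 i ((i+4) mod 5)" unfolding Gm1_nbrs using i e by simp
  then have 2: "x ((i+4) mod 5) = y ((i+4) mod 5)" using h by simp
  show "x i = y i" by (rule assms(2)[OF xy i 1 2])
qed

lemma I0_msgs: "I0 \<subseteq> msgs 5 2"
proof
  fix x assume "x \<in> I0"
  then obtain L where L: "L \<in> set Ls" "x = w L" unfolding I0_def by blast
  have a: "\<forall>i\<in>{0,1,2,3,4::nat}. L ! i < 2" using L(1) unfolding Ls_def by auto
  have "i < 5 \<Longrightarrow> i \<in> {0,1,2,3,4::nat}" for i by auto
  then have "\<forall>i<5. L ! i < 2" using a by blast
  then show "x \<in> msgs 5 2" unfolding msgs_def L(2) w_def by auto
qed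

lemma I0_check:
  "\<forall>L\<in>set Ls. \<forall>L'\<in>set Ls. \<forall>i\<in>{0,1,2,3,4::nat}.
     w L (Suc i mod 5) = w L' (Suc i mod 5) \<longrightarrow> w L ((i+4) mod 5) = w L' ((i+4) mod 5) \<longrightarrow> w L i = w L' i"
  unfolding Ls_def w_def by simp

lemma I0_indep: "indep 5 (Gm 1) 2 I0"
proof (rule indep_C5_intro[OF I0_msgs])
  fix x y i assume "x \<in> I0" "y \<in> I0" "i < 5" "x (Suc i mod 5) = y (Suc i mod 5)"
    "x ((i+4) mod 5) = y ((i+4) mod 5)"
  moreover have "i \<in> {0,1,2,3,4}" using \<open>i<5\<close> by auto
  ultimately show "x i = y i" using I0_check unfolding I0_def by blast
qed

lemma I0_card: "card I0 = 5"
proof -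
  have "inj_on w (set Ls)"
  proof (rule inj_onI)
    fix L L' assume "L \<in> set Ls" "L' \<in> set Ls" and e: "w L = w L'"
    then have l: "length L = 5" "length L' = 5" unfolding Ls_def by auto
    show "L = L'"
    proof (rule nth_equalityI)
      show "length L = length L'" using l by simp
      fix i assume "i < length L"
      then show "L ! i = L' ! i" using fun_cong[OF e, of i] l by (simp add: w_def)
    qed
  qed
  then have "card I0 = card (set Ls)" unfolding I0_def by (rule card_image)
  also have "\<dots> = 5" unfolding Ls_def by simp
  finally show ?thesis .
qed

definition blk :: "nat \<Rightarrow> (nat \<Rightarrow> nat) \<Rightarrow> nat \<Rightarrow> nat" where
  "blk j x = (\<lambda>r. if r < 5 then x (5*j + r) else 0)"
definition Iset :: "nat \<Rightarrow> (nat \<Rightarrow> nat) set" where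
  "Iset m = {x \<in> msgs (5*m) 2. \<forall>j<m. blk j x \<in> I0}"

lemma Iset_indep: "indep (5*m) (Gm m) 2 (Iset m)"
  unfolding indep_def
proof (intro conjI ballI allI impI)
  show "Iset m \<subseteq> msgs (5*m) 2" unfolding Iset_def by blast
  fix x y i assume x: "x \<in> Iset m" and y: "y \<in> Iset m" and i: "i < 5*m"
    and h: "\<forall>j<5*m. Gm m i j \<longrightarrow> x j = y j"
  define j where "j = i div 5"
  define r where "r = i mod 5"
  have jm: "j < m" unfolding j_def using i by auto
  have r5: "r < 5" unfolding r_def by simp
  have ij: "i = 5*j + r" unfolding j_def r_def by simp
  have bx: "blk j x \<in> I0" "blk j y \<in> I0" using x y jm unfolding Iset_def by auto
  have "blk j x r = blk j y r"
  proof -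
    have "\<forall>s<5. Gm 1 r s \<longrightarrow> blk j x s = blk j y s"
    proof (intro allI impI)
      fix s assume s: "s < 5" "Gm 1 r s"
      then have "adj5 r s" unfolding Gm_def using r5 s(1) by simp
      then have "Gm m i (5*(i div 5) + s)" using Gm_blk[OF i s(1)] unfolding r_def by simp
      then have "x (5*j + s) = y (5*j + s)" using h Gm_lt unfolding j_def by blast
      then show "blk j x s = blk j y s" using s by (simp add: blk_def)
    qed
    then show ?thesis using I0_indep bx r5 unfolding indep_def by blast
  qed
  then show "x i = y i" using r5 ij by (simp add: blk_def)
qed

lemma Iset_card: "5^m \<le> card (Iset m)"
proof (induction m)
  case 0
  have "(\<lambda>_. 0) \<in> Iset 0" unfolding Iset_def msgs_def by simp
  moreover have "finite (Iset 0)" unfolding Iset_def by simp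
  ultimately show ?case using card_gt_0_iff by (metis empty_iff power_0 Suc_leI One_nat_def)
next
  case (Suc m)
  define comb where "comb = (\<lambda>(a::nat\<Rightarrow>nat, b::nat\<Rightarrow>nat) i. if i < 5*m then a i else if i < 5*m+5 then b (i - 5*m) else 0)"
  have sub: "comb ` (Iset m \<times> I0) \<subseteq> Iset (Suc m)"
  proof (rule image_subsetI, clarify)
    fix a b assume a: "a \<in> Iset m" and b: "b \<in> I0"
    have am: "a \<in> msgs (5*m) 2" using a unfolding Iset_def by blast
    have bm: "b \<in> msgs 5 2" using b I0_msgs by blast
    show "comb (a, b) \<in> Iset (Suc m)"
      unfolding Iset_def
    proof (intro CollectI conjI allI impI)
      show "comb (a, b) \<in> msgs (5 * Suc m) 2"
        using am bm unfolding msgs_def comb_def by auto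
      fix j assume j: "j < Suc m"
      show "blk j (comb (a, b)) \<in> I0"
      proof (cases "j < m")
        case True
        have "blk j (comb (a, b)) = blk j a"
        proof
          fix r show "blk j (comb (a, b)) r = blk j a r"
          proof (cases "r < 5")
            case True
            then have "5*j + r < 5*m" using \<open>j<m\<close> by linarith
            then show ?thesis using True by (simp add: blk_def comb_def)
          qed (simp add: blk_def)
        qed
        then show ?thesis using a True unfolding Iset_def by simp
      next
        case False
        then have jm: "j = m" using j by simp
        have "blk j (comb (a, b)) = b"
        proof
          fix r show "blk j (comb (a, b)) r = b r"
            using bm jm by (cases "r < 5") (auto simp: blk_def comb_def msgs_def)
        qed
        then show ?thesis using b by simp
      qed
    qed
  qed
  have inj: "inj_on comb (Iset m \<times> I0)"
  proof (rule inj_onI, clarify)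
    fix a b a' b' assume a: "a \<in> Iset m" "a' \<in> Iset m" and b: "b \<in> I0" "b' \<in> I0"
      and e: "comb (a, b) = comb (a', b')"
    have am: "a \<in> msgs (5*m) 2" "a' \<in> msgs (5*m) 2" using a unfolding Iset_def by auto
    have bm: "b \<in> msgs 5 2" "b' \<in> msgs 5 2" using b I0_msgs by auto
    show "a = a' \<and> b = b'"
    proof
      show "a = a'"
      proof
        fix i show "a i = a' i"
        proof (cases "i < 5*m")
          case True then show ?thesis using fun_cong[OF e, of i] by (simp add: comb_def)
        next
          case False then show ?thesis using am by (simp add: msgs_def)
        qed
      qed
      show "b = b'"
      proof
        fix r show "b r = b' r"
        proof (cases "r < 5")
          case True then show ?thesis using fun_cong[OF e, of "5*m + r"] by (simp add: comb_def)
        next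
          case False then show ?thesis using bm by (simp add: msgs_def)
        qed
      qed
    qed
  qed
  have fin: "finite (Iset (Suc m))" unfolding Iset_def by simp
  have "card (Iset m \<times> I0) \<le> card (Iset (Suc m))"
    using card_inj_on_le[OF inj sub fin] .
  then have "card (Iset m) * 5 \<le> card (Iset (Suc m))" by (simp add: card_cartesian_product I0_card)
  then show ?case using Suc.IH by simp
qed


definition xr :: "(nat \<Rightarrow> nat) \<Rightarrow> (nat \<Rightarrow> nat) \<Rightarrow> nat \<Rightarrow> nat" where
  "xr x y = (\<lambda>i. (x i + y i) mod 2)"

lemma msgs2_lt: "x \<in> msgs n 2 \<Longrightarrow> x i < 2" unfolding msgs_def by (cases "i < n") auto

lemma xr_msgs: "x \<in> msgs n 2 \<Longrightarrow> y \<in> msgs n 2 \<Longrightarrow> xr x y \<in> msgs n 2"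
  unfolding msgs_def xr_def by auto

lemma xr_inv: assumes "y \<in> msgs n 2" shows "xr x (xr x y) = y"
proof
  fix i
  have a: "(a + (a + b) mod 2) mod 2 = (b::nat) mod 2" for a b by presburger
  show "xr x (xr x y) i = y i" unfolding xr_def a using msgs2_lt[OF assms] by simp
qed

lemma cover:
  fixes N :: nat
  assumes I: "I \<subseteq> msgs n 2"
    and cond: "card (msgs n 2) * (card (msgs n 2) - card I)^N < card (msgs n 2)^N"
  shows "\<exists>\<tau>. \<forall>x\<in>msgs n 2. \<exists>i<N. xr x (\<tau> i) \<in> I"
proof -
  define G where "G = msgs n 2"
  define Bad where "Bad = (\<lambda>x. PiE {..<N} (\<lambda>_. {y\<in>G. xr x y \<notin> I}))"
  have finG: "finite G" unfolding G_def by simp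
  have cbad: "card {y\<in>G. xr x y \<notin> I} = card G - card I" if x: "x \<in> G" for x
  proof -
    have bij: "bij_betw (xr x) {y\<in>G. xr x y \<in> I} I"
    proof (rule bij_betw_imageI)
      show "inj_on (xr x) {y\<in>G. xr x y \<in> I}"
        by (rule inj_onI) (metis (no_types, lifting) G_def mem_Collect_eq xr_inv)
      show "xr x ` {y\<in>G. xr x y \<in> I} = I"
      proof
        show "xr x ` {y\<in>G. xr x y \<in> I} \<subseteq> I" by auto
        show "I \<subseteq> xr x ` {y\<in>G. xr x y \<in> I}"
        proof
          fix z assume z: "z \<in> I"
          then have zG: "z \<in> G" using I unfolding G_def by blast
          have "xr x z \<in> G" using xr_msgs x zG unfolding G_def by blast
          moreover have "xr x (xr x z) = z" using xr_inv zG unfolding G_def by blast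
          ultimately show "z \<in> xr x ` {y\<in>G. xr x y \<in> I}" using z by (metis (mono_tags, lifting) image_eqI mem_Collect_eq)
        qed
      qed
    qed
    have "{y\<in>G. xr x y \<notin> I} = G - {y\<in>G. xr x y \<in> I}" by auto
    moreover have "card {y\<in>G. xr x y \<in> I} = card I" using bij_betw_same_card[OF bij] .
    ultimately show ?thesis using finG by (simp add: card_Diff_subset)
  qed
  have cB: "card (Bad x) = (card G - card I)^N" if "x \<in> G" for x
    unfolding Bad_def using cbad[OF that] by (simp add: card_PiE)
  have finB: "finite (Bad x)" for x unfolding Bad_def using finG by (simp add: finite_PiE)
  have "card (\<Union>x\<in>G. Bad x) \<le> (\<Sum>x\<in>G. card (Bad x))" by (rule card_UN_le[OF finG])
  also have "\<dots> = (\<Sum>x\<in>G. (card G - card I)^N)" using cB by simp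
  also have "\<dots> = card G * (card G - card I)^N" by simp
  also have "\<dots> < card G ^ N" using cond unfolding G_def .
  also have "\<dots> = card (PiE {..<N} (\<lambda>_. G))" by (simp add: card_PiE)
  finally have lt: "card (\<Union>x\<in>G. Bad x) < card (PiE {..<N} (\<lambda>_. G))" .
  have "\<not> PiE {..<N} (\<lambda>_. G) \<subseteq> (\<Union>x\<in>G. Bad x)"
  proof
    assume "PiE {..<N} (\<lambda>_. G) \<subseteq> (\<Union>x\<in>G. Bad x)"
    then have "card (PiE {..<N} (\<lambda>_. G)) \<le> card (\<Union>x\<in>G. Bad x)"
      using finG finB by (intro card_mono) auto
    then show False using lt by simp
  qed
  then obtain \<tau> where t: "\<tau> \<in> PiE {..<N} (\<lambda>_. G)" "\<tau> \<notin> (\<Union>x\<in>G. Bad x)" by blast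
  have "\<exists>i<N. xr x (\<tau> i) \<in> I" if x: "x \<in> G" for x
  proof (rule ccontr)
    assume "\<not> (\<exists>i<N. xr x (\<tau> i) \<in> I)"
    then have "\<tau> \<in> Bad x" using t(1) unfolding Bad_def by (auto simp: PiE_iff)
    then show False using t(2) x by blast
  qed
  then show ?thesis unfolding G_def by blast
qed

lemma cover_code:
  fixes N K :: nat and \<tau> :: "nat \<Rightarrow> nat \<Rightarrow> nat"
  assumes ind: "indep n E 2 I" and tau: "\<forall>x\<in>msgs n 2. \<exists>i<N. xr x (\<tau> i) \<in> I"
    and NK: "N \<le> 2^K"
  shows "beta_t n E 1 \<le> K"
proof -
  define enc where "enc = (\<lambda>x. LEAST i. xr x (\<tau> i) \<in> I)"
  have encI: "xr x (\<tau> (enc x)) \<in> I" if "x \<in> msgs n 2" for x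
  proof -
    have "\<exists>i<N. xr x (\<tau> i) \<in> I" using bspec[OF tau that] .
    then obtain i where "xr x (\<tau> i) \<in> I" by (elim exE conjE)
    then show ?thesis unfolding enc_def by (rule LeastI[where P = "\<lambda>i. xr x (\<tau> i) \<in> I"])
  qed
  have encN: "enc x < N" if "x \<in> msgs n 2" for x
  proof -
    have "\<exists>i<N. xr x (\<tau> i) \<in> I" using bspec[OF tau that] .
    then obtain i where i: "i < N" "xr x (\<tau> i) \<in> I" by (elim exE conjE)
    have "(LEAST i. xr x (\<tau> i) \<in> I) \<le> i" by (rule Least_le) (rule i(2))
    then show ?thesis unfolding enc_def using i(1) by linarith
  qed
  have s: "is_solution n E (2^1) enc"
    unfolding is_solution_def power_one_right
  proof (intro allI impI ballI)
    fix v x y assume v: "v < n" and x: "x \<in> msgs n 2" and y: "y \<in> msgs n 2"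
      and h: "enc x = enc y \<and> (\<forall>j<n. E v j \<longrightarrow> x j = y j)"
    define t where "t = \<tau> (enc x)"
    have ix: "xr x t \<in> I" unfolding t_def by (rule encI[OF x])
    have iy: "xr y t \<in> I" unfolding t_def using h encI[OF y] by simp
    have "\<forall>j<n. E v j \<longrightarrow> xr x t j = xr y t j" using h unfolding xr_def by simp
    then have "xr x t v = xr y t v" using ind ix iy v unfolding indep_def by blast
    then have "(x v + t v) mod 2 = (y v + t v) mod 2" unfolding xr_def by simp
    then have "x v mod 2 = y v mod 2" by (rule mod2_cancel')
    then show "x v = y v" using msgs2_lt[OF x, of v] msgs2_lt[OF y, of v] by simp
  qed
  have "enc ` msgs n (2^1) \<subseteq> {..<N}" using encN by auto
  then have "card (enc ` msgs n (2^1)) \<le> card {..<N}" by (intro card_mono) auto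
  then have "card (enc ` msgs n (2^1)) \<le> N" by simp
  then show ?thesis using NK by (intro beta_t_le[OF s]) simp
qed


lemma cover_cond:
  fixes g a N :: nat and X :: real
  assumes g: "real g = 32^m" and a: "5^m \<le> a" "a \<le> g" and X: "X = (32/5)^m"
    and N: "X * (5 * real m * ln 2) < real N"
  shows "g * (g - a)^N < g^N"
proof -
  have X1: "1 \<le> X" unfolding X by (rule one_le_power) simp
  have g0: "0 < real g" using g by simp
  have five: "(5::real)^m = 32^m / X" unfolding X by (simp add: power_divide)
  have "real (g - a) = real g - real a" using a(2) by (simp add: of_nat_diff)
  also have "\<dots> \<le> 32^m - 5^m" using g a(1) by (simp add: of_nat_le_iff[symmetric])
  also have "\<dots> = 32^m * (1 - 1/X)" unfolding five by (simp add: field_simps)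
  finally have ga: "real (g - a) \<le> 32^m * (1 - 1/X)" .
  have p0: "0 \<le> 1 - 1/X" using X1 by (simp add: field_simps)
  have "(1 - 1/X)^N \<le> exp (- (1/X))^N"
    using p0 by (intro power_mono) (metis exp_ge_add_one_self uminus_add_conv_diff add.commute)
  also have "\<dots> = exp (- (real N / X))" by (simp add: exp_of_nat_mult[symmetric])
  also have "\<dots> < exp (- ln (32^m))"
  proof -
    have "ln (32^m) = 5 * real m * ln 2"
    proof -
      have "ln ((32::real)^m) = real m * ln 32" by (rule ln_realpow)
      moreover have "ln (32::real) = 5 * ln 2" using ln_realpow[of 2 5] by simp
      ultimately show ?thesis by simp
    qed
    moreover have "X * (5 * real m * ln 2) < real N" by (rule N)
    then have "5 * real m * ln 2 < real N / X" using X1 by (simp add: field_simps)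
    ultimately show ?thesis by simp
  qed
  also have "\<dots> = 1 / 32^m" by (simp add: exp_minus')
  finally have e: "(1 - 1/X)^N < 1 / 32^m" .
  have "real (g * (g - a)^N) = real g * real (g - a)^N" by simp
  also have "\<dots> \<le> 32^m * (32^m * (1 - 1/X))^N"
    unfolding g using ga by (intro mult_left_mono power_mono) auto
  also have "\<dots> = (32^m)^N * (32^m * (1 - 1/X)^N)" by (simp add: power_mult_distrib)
  also have "\<dots> < (32^m)^N * (32^m * (1 / 32^m))"
    using e by (intro mult_strict_left_mono) auto
  also have "\<dots> = real (g^N)" using g by simp
  finally show ?thesis by (simp only: of_nat_less_iff)
qed

lemma beta1_Gm_le:
  "real (beta_1 (5*m) (Gm m)) \<le> real m * (5 - log 2 5) + log 2 (5 * real m * ln 2 + 2) + 1"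
proof -
  define X where "X = (32/5::real)^m"
  define N where "N = nat \<lceil>X * (5 * real m * ln 2)\<rceil> + 1"
  have X1: "1 \<le> X" unfolding X_def by (rule one_le_power) simp
  have l2: "0 < ln (2::real)" by simp
  have Nlt: "X * (5 * real m * ln 2) < real N" unfolding N_def by linarith
  have Nle: "real N \<le> X * (5 * real m * ln 2) + 2"
  proof -
    have "0 \<le> X * (5 * real m * ln 2)" using X1 l2 by simp
    then show ?thesis unfolding N_def by linarith
  qed
  have g: "real (card (msgs (5*m) 2)) = 32^m"
    using card_msgs[of "5*m" 2] by (simp add: power_mult)
  have isub: "Iset m \<subseteq> msgs (5*m) 2" unfolding Iset_def by blast
  have a2: "card (Iset m) \<le> card (msgs (5*m) 2)" by (rule card_mono[OF finite_msgs isub])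
  have cond: "card (msgs (5*m) 2) * (card (msgs (5*m) 2) - card (Iset m))^N < card (msgs (5*m) 2)^N"
    by (rule cover_cond[OF g Iset_card a2 X_def Nlt])
  obtain \<tau> where tau: "\<forall>x\<in>msgs (5*m) 2. \<exists>i<N. xr x (\<tau> i) \<in> Iset m"
    using cover[OF isub cond] by blast
  define K where "K = nat \<lceil>log 2 (real N)\<rceil>"
  have N1: "1 \<le> real N" unfolding N_def by simp
  have logN: "0 \<le> log 2 (real N)" using N1 by simp
  have "real N = 2 powr (log 2 (real N))" using N1 by simp
  also have "\<dots> \<le> 2 powr (real K)" unfolding K_def using logN by (intro powr_mono) linarith+
  also have "\<dots> = real (2^K)" by (simp add: powr_realpow)
  finally have NK: "N \<le> 2^K" by (simp only: of_nat_le_iff)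
  have "beta_1 (5*m) (Gm m) \<le> K" by (rule cover_code[OF Iset_indep tau NK])
  then have "real (beta_1 (5*m) (Gm m)) \<le> real K" by simp
  also have "\<dots> \<le> log 2 (real N) + 1" unfolding K_def using logN by linarith
  also have "log 2 (real N) \<le> log 2 (X * (5 * real m * ln 2 + 2))"
  proof -
    have "real N \<le> X * (5 * real m * ln 2 + 2)" using Nle X1 by (simp add: algebra_simps)
    then show ?thesis using N1 by (subst log_le_cancel_iff) auto
  qed
  also have "log 2 (X * (5 * real m * ln 2 + 2)) = log 2 X + log 2 (5 * real m * ln 2 + 2)"
  proof -
    have "0 < 5 * real m * ln 2 + 2" using l2 by (simp add: add_nonneg_pos)
    then show ?thesis using X1 by (intro log_mult_pos) auto
  qed
  also have "log 2 X = real m * (5 - log 2 5)"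
  proof -
    have "log 2 X = real m * log 2 (32/5)" unfolding X_def by (simp add: log_nat_power)
    moreover have "log 2 (32/5::real) = log 2 32 - log 2 5" by (simp add: log_divide)
    moreover have "log 2 (32::real) = 5"
      using log_nat_power[of "2::real" 2 5] by simp
    ultimately show ?thesis by simp
  qed
  finally show ?thesis by simp
qed


lemma alpha_Gm: "alpha (5*m) (Gm m) = 2*m"
proof -
  let ?P = "\<lambda>S. S \<subseteq> {0..<5*m} \<and> (\<forall>i\<in>S. \<forall>j\<in>S. \<not> Gm m i j)"
  have up: "card S \<le> 2*m" if P: "?P S" for S
  proof -
    have fin: "finite S" using P finite_subset by blast
    have fib: "card {u\<in>S. u div 5 = j} \<le> 2" for j
    proof -
      let ?T = "{u\<in>S. u div 5 = j}"
      let ?R = "(\<lambda>u. u mod 5) ` ?T"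
      let ?rot = "\<lambda>r::nat. Suc r mod 5"
      have inj: "inj_on (\<lambda>u. u mod 5) ?T"
        by (rule inj_onI) (metis (mono_tags, lifting) div_mult_mod_eq mem_Collect_eq)
      have R5: "?R \<subseteq> {..<5}" by auto
      have rotinj: "inj_on ?rot {..<5}" by (rule inj_onI) (simp, presburger)
      have disj: "?R \<inter> ?rot ` ?R = {}"
      proof (rule ccontr)
        assume "?R \<inter> ?rot ` ?R \<noteq> {}"
        then obtain u u' where u: "u \<in> ?T" "u' \<in> ?T" "u mod 5 = Suc (u' mod 5) mod 5" by auto
        have "Gm m u' u" unfolding Gm_def adj5_def using u P by auto
        then show False using u P by blast
      qed
      have "card ?R + card (?rot ` ?R) = card (?R \<union> ?rot ` ?R)"
      proof -
        have finR: "finite ?R" using fin by simp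
        show ?thesis by (rule card_Un_disjoint[symmetric]) (use finR disj in auto)
      qed
      also have "\<dots> \<le> card {..<5::nat}" using R5 by (intro card_mono) auto
      finally have "card ?R + card (?rot ` ?R) \<le> 5" by simp
      moreover have "card (?rot ` ?R) = card ?R"
        using card_image[OF inj_on_subset[OF rotinj R5]] .
      ultimately have "card ?R \<le> 2" by linarith
      then show ?thesis using card_image[OF inj] by simp
    qed
    have "card S = (\<Sum>j\<in>(\<lambda>u. u div 5) ` S. card {u\<in>S. u div 5 = j})"
      unfolding card_eq_sum using sum.image_gen[OF fin, of "\<lambda>_. 1::nat" "\<lambda>u. u div 5"] by simp
    also have "\<dots> \<le> (\<Sum>j\<in>(\<lambda>u. u div 5) ` S. 2)" by (rule sum_mono) (rule fib)
    also have "\<dots> = 2 * card ((\<lambda>u. u div 5) ` S)" by simp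
    also have "\<dots> \<le> 2 * card {..<m}"
    proof -
      have "(\<lambda>u. u div 5) ` S \<subseteq> {..<m}" using P by auto
      then show ?thesis by (intro mult_left_mono card_mono) auto
    qed
    finally show ?thesis by simp
  qed
  define S0 where "S0 = (\<lambda>(j, s). 5*j + s) ` ({..<m} \<times> {0, 2::nat})"
  have inj0: "inj_on (\<lambda>(j, s). 5*j + s) ({..<m} \<times> {0, 2::nat})"
    by (rule inj_on_inverseI[where g = "\<lambda>u. (u div 5, u mod 5)"]) (auto; presburger)
  have c0: "card S0 = 2*m" unfolding S0_def using card_image[OF inj0] by (simp add: card_cartesian_product)
  have P0: "?P S0"
  proof
    show "S0 \<subseteq> {0..<5*m}" unfolding S0_def by auto
    show "\<forall>i\<in>S0. \<forall>j\<in>S0. \<not> Gm m i j"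
    proof (intro ballI)
      fix u v assume "u \<in> S0" "v \<in> S0"
      then obtain j s j' s' where "u = 5*j + s" "v = 5*j' + s'" "s \<in> {0,2}" "s' \<in> {0,2}"
        unfolding S0_def by auto
      then have "u mod 5 \<in> {0,2}" "v mod 5 \<in> {0,2}" by auto
      then have "\<not> adj5 (u mod 5) (v mod 5)" unfolding adj5_def by auto
      then show "\<not> Gm m u v" unfolding Gm_def by simp
    qed
  qed
  have fin: "finite {card S | S. ?P S}"
  proof (rule finite_subset)
    show "{card S | S. ?P S} \<subseteq> {..5*m}"
    proof
      fix k assume "k \<in> {card S | S. ?P S}"
      then obtain S where "k = card S" "?P S" by blast
      then have "k \<le> card {0..<5*m}" by (metis card_mono finite_atLeastLessThan)
      then show "k \<in> {..5*m}" by simp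
    qed
  qed simp
  show ?thesis unfolding alpha_def
  proof (rule Max_eqI[OF fin])
    show "\<And>y. y \<in> {card S | S. ?P S} \<Longrightarrow> y \<le> 2*m" using up by blast
    show "2*m \<in> {card S | S. ?P S}" unfolding mem_Collect_eq
      by (rule exI[of _ S0], rule conjI[OF c0[symmetric] P0])
  qed
qed

lemma beta_Gm: "beta (5*m) (Gm m) = real (5*m) / 2"
proof -
  let ?f = "\<lambda>t. real (beta_t (5*m) (Gm m) t) / real t"
  have lo: "real (5*m) / 2 \<le> ?f t" if "t \<in> {1..}" for t
  proof -
    have t: "0 < real t" using that by simp
    have "real (5*m) * real t / 2 \<le> real (beta_t (5*m) (Gm m) t)" by (rule beta_t_Gm_ge)
    then show ?thesis using t by (simp add: field_simps)
  qed
  have "beta (5*m) (Gm m) \<ge> real (5*m) / 2"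
    unfolding beta_def by (rule cINF_greatest) (use lo in auto)
  moreover have "beta (5*m) (Gm m) \<le> ?f 2"
  proof -
    have bdd: "bdd_below (?f ` {1..})" by (rule bdd_belowI2[where m = "real (5*m) / 2"]) (rule lo)
    show ?thesis unfolding beta_def by (rule cINF_lower[OF bdd]) simp
  qed
  moreover have "?f 2 \<le> real (5*m) / 2"
    using beta2_Gm_le[of m] by (simp add: divide_right_mono)
  ultimately show ?thesis by linarith
qed

lemma beta_star_Gm:
  "real m * (5 - log 2 5) \<le> beta_star (5*m) (Gm m)"
  "beta_star (5*m) (Gm m) \<le> real (beta_1 (5*m) (Gm m))"
proof -
  let ?f = "\<lambda>t. real (beta_1 (copies_n t (5*m)) (copies_E t (5*m) (Gm m))) / real t"
  have ft: "?f t = real (beta_1 (5*(t*m)) (Gm (t*m))) / real t" for t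
  proof -
    have "copies_n t (5*m) = 5*(t*m)" unfolding copies_n_def by simp
    then show ?thesis by (simp add: copies_Gm)
  qed
  have lo: "real m * (5 - log 2 5) \<le> ?f t" if "t \<in> {1..}" for t
  proof -
    have t: "0 < real t" using that by simp
    have "real (t*m) * (5 - log 2 5) \<le> real (beta_1 (5*(t*m)) (Gm (t*m)))" by (rule beta1_Gm_ge)
    then show ?thesis unfolding ft using t by (simp add: field_simps)
  qed
  show "real m * (5 - log 2 5) \<le> beta_star (5*m) (Gm m)"
    unfolding beta_star_def by (rule cINF_greatest) (use lo in auto)
  have bdd: "bdd_below (?f ` {1..})" by (rule bdd_belowI2[where m = "real m * (5 - log 2 5)"]) (rule lo)
  have "beta_star (5*m) (Gm m) \<le> ?f 1"
    unfolding beta_star_def by (rule cINF_lower[OF bdd]) simp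
  then show "beta_star (5*m) (Gm m) \<le> real (beta_1 (5*m) (Gm m))" unfolding ft by simp
qed

lemma eps_lim: "(\<lambda>k. (log 2 (5 * real (Suc k) * ln 2 + 2) + 1) / (5 * real (Suc k))) \<longlonglongrightarrow> 0"
  by real_asymp


theorem corollary2p15:
  shows "\<exists>(N :: nat \<Rightarrow> nat) (G :: nat \<Rightarrow> nat \<Rightarrow> nat \<Rightarrow> bool).
     filterlim N at_top at_top \<and>
     (\<forall>k. is_graph (N k) (G k)
          \<and> beta (N k) (G k) = real (N k) / 2
          \<and> real (alpha (N k) (G k)) = 2 / 5 * real (N k)) \<and>
     ((\<lambda>k. real (beta_1 (N k) (G k)) / real (N k)) \<longlonglongrightarrow> 1 - log 2 5 / 5) \<and>
     ((\<lambda>k. beta_star (N k) (G k) / real (beta_1 (N k) (G k))) \<longlonglongrightarrow> 1)"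
proof (intro exI conjI)
  define c where "c = 1 - log 2 5 / 5"
  define eps where "eps = (\<lambda>k. (log 2 (5 * real (Suc k) * ln 2 + 2) + 1) / (5 * real (Suc k)))"
  have l5: "log 2 5 < (5::real)"
  proof -
    have "log 2 (5::real) < log 2 32" by simp
    moreover have "log 2 (32::real) = 5" using log_nat_power[of "2::real" 2 5] by simp
    ultimately show ?thesis by simp
  qed
  have c0: "0 < c" unfolding c_def using l5 by simp
  have eps0: "eps \<longlonglongrightarrow> 0" unfolding eps_def by (rule eps_lim)
  have ceps: "(\<lambda>k. c + eps k) \<longlonglongrightarrow> c" using tendsto_add[OF tendsto_const eps0, of c] by simp
  have bnd: "c \<le> real (beta_1 (5 * Suc k) (Gm (Suc k))) / real (5 * Suc k) \<and>
             real (beta_1 (5 * Suc k) (Gm (Suc k))) / real (5 * Suc k) \<le> c + eps k" for k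
  proof -
    let ?m = "Suc k"
    have pos: "0 < real (5 * ?m)" by simp
    have lo: "real ?m * (5 - log 2 5) \<le> real (beta_1 (5 * ?m) (Gm ?m))" by (rule beta1_Gm_ge)
    have up: "real (beta_1 (5 * ?m) (Gm ?m)) \<le> real ?m * (5 - log 2 5) + log 2 (5 * real ?m * ln 2 + 2) + 1"
      by (rule beta1_Gm_le)
    have e1: "c * real (5 * ?m) = real ?m * (5 - log 2 5)" unfolding c_def by (simp add: field_simps)
    have e2: "(c + eps k) * real (5 * ?m) = real ?m * (5 - log 2 5) + log 2 (5 * real ?m * ln 2 + 2) + 1"
      unfolding c_def eps_def by (simp add: field_simps)
    show ?thesis using lo up pos e1 e2 by (simp add: le_divide_eq divide_le_eq)
  qed
  show "filterlim (\<lambda>k. 5 * Suc k) at_top at_top"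
  proof (subst filterlim_at_top, intro allI)
    fix Z :: nat
    show "eventually (\<lambda>k. Z \<le> 5 * Suc k) sequentially"
      unfolding eventually_sequentially by (intro exI[of _ Z]) auto
  qed
  show "\<forall>k. is_graph (5 * Suc k) (Gm (Suc k)) \<and> beta (5 * Suc k) (Gm (Suc k)) = real (5 * Suc k) / 2
          \<and> real (alpha (5 * Suc k) (Gm (Suc k))) = 2 / 5 * real (5 * Suc k)"
  proof (intro allI conjI)
    fix k
    show "is_graph (5 * Suc k) (Gm (Suc k))" by (rule is_graph_Gm)
    show "beta (5 * Suc k) (Gm (Suc k)) = real (5 * Suc k) / 2" by (rule beta_Gm)
    have "alpha (5 * Suc k) (Gm (Suc k)) = 2 * Suc k" by (rule alpha_Gm)
    then show "real (alpha (5 * Suc k) (Gm (Suc k))) = 2 / 5 * real (5 * Suc k)" by simp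
  qed
  show "(\<lambda>k. real (beta_1 (5 * Suc k) (Gm (Suc k))) / real (5 * Suc k)) \<longlonglongrightarrow> 1 - log 2 5 / 5"
    unfolding c_def[symmetric]
    by (rule tendsto_sandwich[OF _ _ tendsto_const ceps]) (use bnd in auto)
  show "(\<lambda>k. beta_star (5 * Suc k) (Gm (Suc k)) / real (beta_1 (5 * Suc k) (Gm (Suc k)))) \<longlonglongrightarrow> 1"
  proof (rule tendsto_sandwich[OF _ _ _ tendsto_const])
    have "(\<lambda>k. c / (c + eps k)) \<longlonglongrightarrow> c / c" using tendsto_divide[OF tendsto_const[of c] ceps] c0 by simp
    then show "(\<lambda>k. c / (c + eps k)) \<longlonglongrightarrow> 1" using c0 by simp
    show "\<forall>\<^sub>F k in sequentially. c / (c + eps k) \<le> beta_star (5 * Suc k) (Gm (Suc k)) / real (beta_1 (5 * Suc k) (Gm (Suc k)))"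
    proof (rule always_eventually, rule allI)
      fix k
      let ?m = "Suc k"
      let ?b = "real (beta_1 (5 * ?m) (Gm ?m))"
      have pos: "0 < real (5 * ?m)" by simp
      have b1: "c * real (5 * ?m) \<le> ?b" using bnd[of k] pos by (simp add: le_divide_eq)
      have b2: "?b \<le> (c + eps k) * real (5 * ?m)" using bnd[of k] pos by (simp add: divide_le_eq)
      have bpos: "0 < ?b" using b1 c0 pos by (smt (verit) mult_pos_pos)
      have s1: "c * real (5 * ?m) \<le> beta_star (5 * ?m) (Gm ?m)"
        using beta_star_Gm(1)[of ?m] unfolding c_def by (simp add: field_simps)
      have "c / (c + eps k) = (c * real (5 * ?m)) / ((c + eps k) * real (5 * ?m))" using pos by simp
      also have "\<dots> \<le> beta_star (5 * ?m) (Gm ?m) / ?b"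
      proof -
        have "0 < c * real (5 * ?m)" using c0 pos by simp
        then have "0 \<le> beta_star (5 * ?m) (Gm ?m)" using s1 by linarith
        then show ?thesis using s1 b2 bpos by (intro frac_le) auto
      qed
      finally show "c / (c + eps k) \<le> beta_star (5 * ?m) (Gm ?m) / ?b" .
    qed
    show "\<forall>\<^sub>F k in sequentially. beta_star (5 * Suc k) (Gm (Suc k)) / real (beta_1 (5 * Suc k) (Gm (Suc k))) \<le> 1"
    proof (rule always_eventually, rule allI)
      fix k
      let ?m = "Suc k"
      have pos: "0 < real (5 * ?m)" by simp
      have "c * real (5 * ?m) \<le> real (beta_1 (5 * ?m) (Gm ?m))" using bnd[of k] pos by (simp add: le_divide_eq)
      then have "0 < real (beta_1 (5 * ?m) (Gm ?m))" using c0 pos by (smt (verit) mult_pos_pos)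
      then show "beta_star (5 * ?m) (Gm ?m) / real (beta_1 (5 * ?m) (Gm ?m)) \<le> 1"
        using beta_star_Gm(2)[of ?m] by simp
    qed
  qed
qed


end
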